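(* Let $\mathcal{A}=(Q,\delta,I,F)$ be a complete Büchi automaton and let $p,q,r\in Q$ and $a\in\Sigma$ be such that $q\in\delta(r,a)$ and $p\preceq_{\mathit{de}}q$. Let $\mathcal{A}'=(Q,\delta',I,F)$ where $\delta'=\delta\cup\{r\xrightarrow{a}p\}$ (i.e. $\delta'(r,a)=\delta(r,a)\cup\{p\}$ and $\delta'$ agrees with $\delta$ elsewhere). Then $\mathcal{L}(\mathcal{A})=\mathcal{L}(\mathcal{A}')$.
   Context: A Büchi automaton is $\mathcal{A}=(Q,\delta,I,F)$ over a finite alphabet $\Sigma$ with $\delta:Q\times\Sigma\to2^Q$, complete if $\delta(q,a)\ne\emptyset$ always. A run from $q$ on $\alpha=\alpha_0\alpha_1\cdots$ is $\rho$ with $\rho_0=q$, $\rho_{i+1}\in\delta(\rho_i,\alpha_i)$; accepting if some state of $F$ occurs infinitely often; $\mathcal{L}(\mathcal{A})$ is the set of words with an accepting run from an initial state. Delayed simulation: in the game from $(p_0,r_0)$, in round $i$ Spoiler picks $p_i\xrightarrow{\alpha_i}p_{i+1}$ and Duplicator answers $r_i\xrightarrow{\alpha_i}r_{i+1}$; a Duplicator strategy is a map $\sigma$ with $\sigma(r,p\xrightarrow{a}p')\in\delta(r,a)$ (no lookahead). Duplicator wins if for all $i$, $p_i\in F$ implies $r_k\in F$ for some $k\ge i$. $p\preceq_{\mathit{de}}r$ (the delayed simulation on $\mathcal{A}$) iff Duplicator has a winning strategy in $\mathcal{A}$ from $(p,r)$. *)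

theory Defs
  imports Main
begin

definition buchi_wf :: "'q set \<Rightarrow> ('q \<Rightarrow> 'a \<Rightarrow> 'q set) \<Rightarrow> 'q set \<Rightarrow> 'q set \<Rightarrow> bool" where
  "buchi_wf Q \<delta> I F \<longleftrightarrow> finite Q \<and> I \<subseteq> Q \<and> F \<subseteq> Q \<and>
     (\<forall>q\<in>Q. \<forall>a. \<delta> q a \<subseteq> Q)"

definition complete :: "'q set \<Rightarrow> ('q \<Rightarrow> 'a \<Rightarrow> 'q set) \<Rightarrow> bool" where
  "complete Q \<delta> \<longleftrightarrow> (\<forall>q\<in>Q. \<forall>a. \<delta> q a \<noteq> {})"

definition is_run :: "('q \<Rightarrow> 'a \<Rightarrow> 'q set) \<Rightarrow> 'q \<Rightarrow> (nat \<Rightarrow> 'a) \<Rightarrow> (nat \<Rightarrow> 'q) \<Rightarrow> bool" where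
  "is_run \<delta> q \<alpha> \<rho> \<longleftrightarrow> \<rho> 0 = q \<and> (\<forall>i. \<rho> (Suc i) \<in> \<delta> (\<rho> i) (\<alpha> i))"

definition accepting :: "'q set \<Rightarrow> (nat \<Rightarrow> 'q) \<Rightarrow> bool" where
  "accepting F \<rho> \<longleftrightarrow> (\<exists>\<^sub>\<infinity>i. \<rho> i \<in> F)"

definition lang :: "('q \<Rightarrow> 'a \<Rightarrow> 'q set) \<Rightarrow> 'q set \<Rightarrow> 'q set \<Rightarrow> (nat \<Rightarrow> 'a) set" where
  "lang \<delta> I F = {\<alpha>. \<exists>q\<in>I. \<exists>\<rho>. is_run \<delta> q \<alpha> \<rho> \<and> accepting F \<rho>}"

text \<open>Duplicator's response sequence in the game, given Spoiler's run p on word \<alpha>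
  and a (lookahead-free) Duplicator strategy \<sigma>, which maps the current Duplicator
  state and Spoiler's transition (p, a, p') to a successor.\<close>
fun dup_play :: "('q \<Rightarrow> 'q \<times> 'a \<times> 'q \<Rightarrow> 'q) \<Rightarrow> 'q \<Rightarrow> (nat \<Rightarrow> 'q) \<Rightarrow> (nat \<Rightarrow> 'a) \<Rightarrow> nat \<Rightarrow> 'q" where
  "dup_play \<sigma> r0 p \<alpha> 0 = r0"
| "dup_play \<sigma> r0 p \<alpha> (Suc i) = \<sigma> (dup_play \<sigma> r0 p \<alpha> i) (p i, \<alpha> i, p (Suc i))"

definition is_strategy :: "('q \<Rightarrow> 'a \<Rightarrow> 'q set) \<Rightarrow> ('q \<Rightarrow> 'q \<times> 'a \<times> 'q \<Rightarrow> 'q) \<Rightarrow> bool" where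
  "is_strategy \<delta> \<sigma> \<longleftrightarrow> (\<forall>r p a p'. p' \<in> \<delta> p a \<longrightarrow> \<sigma> r (p, a, p') \<in> \<delta> r a)"

definition delayed_sim :: "('q \<Rightarrow> 'a \<Rightarrow> 'q set) \<Rightarrow> 'q set \<Rightarrow> 'q \<Rightarrow> 'q \<Rightarrow> bool" where
  "delayed_sim \<delta> F p0 r0 \<longleftrightarrow> (\<exists>\<sigma>. is_strategy \<delta> \<sigma> \<and>
     (\<forall>\<alpha> p. is_run \<delta> p0 \<alpha> p \<longrightarrow>
        (\<forall>i. p i \<in> F \<longrightarrow> (\<exists>k\<ge>i. dup_play \<sigma> r0 p \<alpha> k \<in> F))))"

end

theory Submission
  imports Defs "HOL-Library.Infinite_Set"
begin

function lay :: "(nat \<Rightarrow> 'q) \<Rightarrow> (nat \<Rightarrow> 'a) \<Rightarrow> (nat \<Rightarrow> nat) \<Rightarrow> ('q \<Rightarrow> 'q \<times> 'a \<times> 'q \<Rightarrow> 'q) \<Rightarrow> 'q \<Rightarrow> nat \<Rightarrow> nat \<Rightarrow> 'q" where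
  "lay \<rho> \<alpha> u \<sigma> q k n = (if n \<le> u k \<or> \<not> strict_mono u then \<rho> n
     else if n = Suc (u k) then q
     else \<sigma> (lay \<rho> \<alpha> u \<sigma> q k (n - 1)) (lay \<rho> \<alpha> u \<sigma> q (Suc k) (n - 1), \<alpha> (n - 1), lay \<rho> \<alpha> u \<sigma> q (Suc k) n))"
  by pat_completeness auto
termination
  by (relation "measure (\<lambda>(\<rho>,\<alpha>,u,\<sigma>,q,k,n). n - u k)")
     (auto simp: strict_mono_Suc_iff diff_less_mono2 intro!: diff_less_mono2 less_SucI
       dest: spec[where x=k])

declare lay.simps [simp del]

lemma lay_le: "strict_mono u \<Longrightarrow> n \<le> u k \<Longrightarrow> lay \<rho> \<alpha> u \<sigma> q k n = \<rho> n"
  by (simp add: lay.simps)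

lemma lay_q: "strict_mono u \<Longrightarrow> lay \<rho> \<alpha> u \<sigma> q k (Suc (u k)) = q"
  by (simp add: lay.simps)

lemma lay_step: "strict_mono u \<Longrightarrow> u k < n \<Longrightarrow>
   lay \<rho> \<alpha> u \<sigma> q k (Suc n) = \<sigma> (lay \<rho> \<alpha> u \<sigma> q k n) (lay \<rho> \<alpha> u \<sigma> q (Suc k) n, \<alpha> n, lay \<rho> \<alpha> u \<sigma> q (Suc k) (Suc n))"
  by (subst lay.simps) auto

lemma dup_valid:
  assumes "is_strategy \<delta> \<sigma>" "\<forall>i. S (Suc i) \<in> \<delta> (S i) (W i)"
  shows "dup_play \<sigma> d S W (Suc i) \<in> \<delta> (dup_play \<sigma> d S W i) (W i)"
  using assms unfolding is_strategy_def by simp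

lemma inf_case:
  fixes \<delta> :: "'q \<Rightarrow> 'a \<Rightarrow> 'q set"
  assumes strat: "is_strategy \<delta> \<sigma>"
    and win: "\<forall>\<alpha> S. is_run \<delta> p \<alpha> S \<longrightarrow> (\<forall>i. S i \<in> F \<longrightarrow> (\<exists>k\<ge>i. dup_play \<sigma> q S \<alpha> k \<in> F))"
    and qd: "q \<in> \<delta> r a"
    and H: "\<forall>i. \<rho> (Suc i) \<in> \<delta> (\<rho> i) (\<alpha> i) \<or> (\<rho> i = r \<and> \<alpha> i = a \<and> \<rho> (Suc i) = p)"
    and Uinf: "infinite {i. \<rho> (Suc i) \<notin> \<delta> (\<rho> i) (\<alpha> i)}"
    and acc: "accepting F \<rho>"
  shows "\<exists>\<rho>'. is_run \<delta> (\<rho> 0) \<alpha> \<rho>' \<and> accepting F \<rho>'"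
proof -
  define U where "U = {i. \<rho> (Suc i) \<notin> \<delta> (\<rho> i) (\<alpha> i)}"
  define u where "u = enumerate U"
  have inf: "infinite U" using Uinf U_def by simp
  have sm: "strict_mono u" unfolding u_def using inf
    by (simp add: strict_mono_def enumerate_mono)
  have uU: "u k \<in> U" for k unfolding u_def using inf by (simp add: enumerate_in_set)
  have between: "j \<notin> U" if "u k < j" "j < u (Suc k)" for k j
  proof
    assume "j \<in> U"
    then obtain m where m: "u m = j" unfolding u_def using enumerate_Ex[OF inf] by blast
    from that m sm have "k < m" "m < Suc k" by (auto simp: strict_mono_less)
    then show False by simp
  qed
  have below0: "j \<notin> U" if "j < u 0" for j
  proof
    assume "j \<in> U"
    then obtain m where m: "u m = j" unfolding u_def using enumerate_Ex[OF inf] by blast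
    from that m sm show False by (auto simp: strict_mono_less)
  qed
  have ruk: "\<rho> (u k) = r" "\<alpha> (u k) = a" "\<rho> (Suc (u k)) = p" for k
  proof -
    have "\<rho> (Suc (u k)) \<notin> \<delta> (\<rho> (u k)) (\<alpha> (u k))" using uU[of k] unfolding U_def by simp
    then show "\<rho> (u k) = r" "\<alpha> (u k) = a" "\<rho> (Suc (u k)) = p" using H[rule_format, of "u k"] by auto
  qed
  define L where "L = lay \<rho> \<alpha> u \<sigma> q"
  have Lle: "n \<le> u k \<Longrightarrow> L k n = \<rho> n" for k n unfolding L_def by (rule lay_le[OF sm])
  have Lq: "L k (Suc (u k)) = q" for k unfolding L_def by (rule lay_q[OF sm])
  have Lstep: "u k < n \<Longrightarrow> L k (Suc n) = \<sigma> (L k n) (L (Suc k) n, \<alpha> n, L (Suc k) (Suc n))" for k n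
    unfolding L_def by (rule lay_step[OF sm])
  have usk: "u k < u (Suc k)" for k using sm by (simp add: strict_mono_Suc_iff)
  have V0: "\<forall>k. j < u (k + d) \<longrightarrow> u k \<le> j \<longrightarrow> L k (Suc j) \<in> \<delta> (L k j) (\<alpha> j)" for d j
  proof (induction d)
    case 0 then show ?case by auto
  next
    case (Suc d)
    show ?case
    proof (intro allI impI)
      fix k assume a1: "j < u (k + Suc d)" and a2: "u k \<le> j"
      show "L k (Suc j) \<in> \<delta> (L k j) (\<alpha> j)"
      proof (cases "j = u k")
        case True
        then show ?thesis using Lle[of j k] Lq[of k] ruk[of k] qd by simp
      next
        case False
        then have jk: "u k < j" using a2 by simp
        have sv: "L (Suc k) (Suc j) \<in> \<delta> (L (Suc k) j) (\<alpha> j)"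
        proof (cases "u (Suc k) \<le> j")
          case True
          then show ?thesis using Suc.IH a1 by (metis add_Suc_shift)
        next
          case False
          then have "j \<notin> U" using between[OF jk] by simp
          then show ?thesis using Lle[of j "Suc k"] Lle[of "Suc j" "Suc k"] False
            unfolding U_def by simp
        qed
        show ?thesis using Lstep[OF jk] strat sv unfolding is_strategy_def by simp
      qed
    qed
  qed
  have V: "u k \<le> j \<Longrightarrow> L k (Suc j) \<in> \<delta> (L k j) (\<alpha> j)" for k j
  proof -
    assume "u k \<le> j"
    moreover have "j < u (k + Suc j)" using strict_mono_imp_increasing[OF sm, of "k + Suc j"] by simp
    ultimately show ?thesis using V0[of j "Suc j"] by blast
  qed
  have P: "\<exists>m\<ge>n. L k m \<in> F" if nk: "u k < n" and F: "L (Suc k) n \<in> F" for k n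
  proof -
    define S where "S = (\<lambda>i. L (Suc k) (Suc (u k) + i))"
    define W where "W = (\<lambda>i. \<alpha> (Suc (u k) + i))"
    have Srun: "is_run \<delta> p W S"
      unfolding is_run_def
    proof
      show "S 0 = p" unfolding S_def using Lle[of "Suc (u k)" "Suc k"] usk[of k] ruk by simp
      show "\<forall>i. S (Suc i) \<in> \<delta> (S i) (W i)"
      proof
        fix i
        let ?j = "Suc (u k) + i"
        show "S (Suc i) \<in> \<delta> (S i) (W i)"
        proof (cases "u (Suc k) \<le> ?j")
          case True then show ?thesis using V[OF True] unfolding S_def W_def by simp
        next
          case False
          then have "?j \<notin> U" using between[of k ?j] by simp
          then show ?thesis using Lle[of ?j "Suc k"] Lle[of "Suc ?j" "Suc k"] False
            unfolding U_def S_def W_def by simp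
        qed
      qed
    qed
    have D: "dup_play \<sigma> q S W i = L k (Suc (u k) + i)" for i
    proof (induction i)
      case 0 then show ?case using Lq by simp
    next
      case (Suc i)
      then show ?case using Lstep[of k "Suc (u k) + i"] unfolding S_def W_def by simp
    qed
    have "S (n - Suc (u k)) \<in> F" unfolding S_def using F nk by simp
    then obtain k' where "k' \<ge> n - Suc (u k)" "dup_play \<sigma> q S W k' \<in> F"
      using win Srun by blast
    then show ?thesis using D[of k'] nk by (intro exI[of _ "Suc (u k) + k'"]) auto
  qed
  have down: "\<forall>k. K - k = d \<longrightarrow> k \<le> K \<longrightarrow> (\<exists>m\<ge>n. L k m \<in> F)"
    if "n \<le> u K" "\<rho> n \<in> F" for n K d
  proof (induction d)
    case 0 then show ?case using that Lle by auto
  next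
    case (Suc d)
    show ?case
    proof (intro allI impI)
      fix k assume kk: "K - k = Suc d" "k \<le> K"
      then have "K - Suc k = d" "Suc k \<le> K" by arith+
      then obtain m where m: "m \<ge> n" "L (Suc k) m \<in> F" using Suc.IH by blast
      show "\<exists>m\<ge>n. L k m \<in> F"
      proof (cases "u k < m")
        case True then show ?thesis using P[OF True m(2)] m(1) by (meson order_trans)
      next
        case False
        then have "L k m = L (Suc k) m" using Lle[of m k] Lle[of m "Suc k"] usk[of k] by simp
        then show ?thesis using m by auto
      qed
    qed
  qed
  have run: "is_run \<delta> (\<rho> 0) \<alpha> (L 0)"
    unfolding is_run_def
  proof
    show "L 0 0 = \<rho> 0" using Lle by simp
    show "\<forall>i. L 0 (Suc i) \<in> \<delta> (L 0 i) (\<alpha> i)"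
    proof
      fix i show "L 0 (Suc i) \<in> \<delta> (L 0 i) (\<alpha> i)"
      proof (cases "u 0 \<le> i")
        case True then show ?thesis using V by simp
      next
        case False
        then show ?thesis using below0[of i] Lle[of i 0] Lle[of "Suc i" 0] unfolding U_def by simp
      qed
    qed
  qed
  have "accepting F (L 0)"
    unfolding accepting_def INFM_nat
  proof
    fix N
    obtain n where n: "n > N" "\<rho> n \<in> F" using acc unfolding accepting_def INFM_nat by blast
    have "n \<le> u n" using strict_mono_imp_increasing[OF sm] by simp
    then obtain m where "m \<ge> n" "L 0 m \<in> F" using down[of n n n] n by (metis diff_zero le0)
    then show "\<exists>m>N. L 0 m \<in> F" using n by (intro exI[of _ m]) auto
  qed
  then show ?thesis using run by blast
qed


lemma fin_case:
  fixes \<delta> :: "'q \<Rightarrow> 'a \<Rightarrow> 'q set"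
  assumes strat: "is_strategy \<delta> \<sigma>"
    and win: "\<forall>\<alpha> S. is_run \<delta> p \<alpha> S \<longrightarrow> (\<forall>i. S i \<in> F \<longrightarrow> (\<exists>k\<ge>i. dup_play \<sigma> q S \<alpha> k \<in> F))"
    and qd: "q \<in> \<delta> r a"
  shows "finite {i. \<rho> (Suc i) \<notin> \<delta> (\<rho> i) (\<alpha> i)} \<Longrightarrow>
    \<forall>i. \<rho> (Suc i) \<in> \<delta> (\<rho> i) (\<alpha> i) \<or> (\<rho> i = r \<and> \<alpha> i = a \<and> \<rho> (Suc i) = p) \<Longrightarrow>
    accepting F \<rho> \<Longrightarrow> \<exists>\<rho>'. is_run \<delta> (\<rho> 0) \<alpha> \<rho>' \<and> accepting F \<rho>'"
proof (induction "card {i. \<rho> (Suc i) \<notin> \<delta> (\<rho> i) (\<alpha> i)}" arbitrary: \<rho> rule: less_induct)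
  case less
  define U where "U = {i. \<rho> (Suc i) \<notin> \<delta> (\<rho> i) (\<alpha> i)}"
  have finU: "finite U" using less.prems(1) U_def by simp
  show ?case
  proof (cases "U = {}")
    case True
    then have "is_run \<delta> (\<rho> 0) \<alpha> \<rho>" unfolding U_def is_run_def by auto
    then show ?thesis using less.prems(3) by blast
  next
    case False
    define j where "j = Max U"
    have jU: "j \<in> U" using False finU j_def by simp
    have above: "i \<notin> U" if "i > j" for i
    proof
      assume "i \<in> U"
      then have "i \<le> j" unfolding j_def using finU by simp
      then show False using that by simp
    qed
    have rj: "\<rho> j = r" "\<alpha> j = a" "\<rho> (Suc j) = p"
    proof -
      have "\<rho> (Suc j) \<notin> \<delta> (\<rho> j) (\<alpha> j)" using jU unfolding U_def by simp
      then show "\<rho> j = r" "\<alpha> j = a" "\<rho> (Suc j) = p" using less.prems(2)[rule_format, of j] by auto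
    qed
    define S where "S = (\<lambda>i. \<rho> (Suc j + i))"
    define W where "W = (\<lambda>i. \<alpha> (Suc j + i))"
    define D where "D = dup_play \<sigma> q S W"
    define \<rho>' where "\<rho>' = (\<lambda>i. if i \<le> j then \<rho> i else D (i - Suc j))"
    have Svalid: "\<forall>i. S (Suc i) \<in> \<delta> (S i) (W i)"
    proof
      fix i
      have "Suc j + i \<notin> U" using above by simp
      then show "S (Suc i) \<in> \<delta> (S i) (W i)" unfolding U_def S_def W_def by simp
    qed
    have Srun: "is_run \<delta> p W S" unfolding is_run_def using Svalid rj S_def by simp
    have \<rho>'D: "\<rho>' (Suc j + t) = D t" for t unfolding \<rho>'_def by simp
    have valid_after: "\<rho>' (Suc i) \<in> \<delta> (\<rho>' i) (\<alpha> i)" if "i \<ge> j" for i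
    proof (cases "i = j")
      case True
      then show ?thesis using rj qd \<rho>'D[of 0] unfolding \<rho>'_def D_def by simp
    next
      case False
      define t where "t = i - Suc j"
      have t: "i = Suc j + t" using that False unfolding t_def by simp
      have "D (Suc t) \<in> \<delta> (D t) (W t)" unfolding D_def by (rule dup_valid[OF strat Svalid])
      then show ?thesis using \<rho>'D[of t] \<rho>'D[of "Suc t"] t unfolding W_def by simp
    qed
    define U' where "U' = {i. \<rho>' (Suc i) \<notin> \<delta> (\<rho>' i) (\<alpha> i)}"
    have sub: "U' \<subseteq> U - {j}"
    proof
      fix i assume iU': "i \<in> U'"
      have "i < j"
      proof (rule ccontr)
        assume "\<not> i < j"
        then have "\<rho>' (Suc i) \<in> \<delta> (\<rho>' i) (\<alpha> i)" using valid_after by simp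
        then show False using iU' unfolding U'_def by simp
      qed
      then show "i \<in> U - {j}" using iU' unfolding U'_def U_def \<rho>'_def by auto
    qed
    have cardlt: "card U' < card U"
    proof (rule psubset_card_mono[OF finU])
      show "U' \<subset> U" using sub jU by blast
    qed
    have H': "\<forall>i. \<rho>' (Suc i) \<in> \<delta> (\<rho>' i) (\<alpha> i) \<or> (\<rho>' i = r \<and> \<alpha> i = a \<and> \<rho>' (Suc i) = p)"
    proof
      fix i
      show "\<rho>' (Suc i) \<in> \<delta> (\<rho>' i) (\<alpha> i) \<or> (\<rho>' i = r \<and> \<alpha> i = a \<and> \<rho>' (Suc i) = p)"
      proof (cases "i < j")
        case True
        then have "\<rho>' i = \<rho> i" "\<rho>' (Suc i) = \<rho> (Suc i)" unfolding \<rho>'_def by auto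
        then show ?thesis using less.prems(2)[rule_format, of i] by simp
      next
        case False then show ?thesis using valid_after by simp
      qed
    qed
    have acc': "accepting F \<rho>'"
      unfolding accepting_def INFM_nat
    proof
      fix N
      obtain n where n: "n > max N j" "\<rho> n \<in> F"
        using less.prems(3) unfolding accepting_def INFM_nat by blast
      have "S (n - Suc j) \<in> F" unfolding S_def using n by simp
      then obtain k where k: "k \<ge> n - Suc j" "D k \<in> F" using win Srun unfolding D_def by blast
      show "\<exists>m>N. \<rho>' m \<in> F"
        using k n \<rho>'D[of k] by (intro exI[of _ "Suc j + k"]) auto
    qed
    have "finite U'" using sub finU finite_subset by blast
    then have "\<exists>\<rho>''. is_run \<delta> (\<rho>' 0) \<alpha> \<rho>'' \<and> accepting F \<rho>''"
      using less.hyps[of \<rho>', OF _ _ H' acc'] cardlt unfolding U_def U'_def by simp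
    then obtain \<rho>'' where "is_run \<delta> (\<rho>' 0) \<alpha> \<rho>''" "accepting F \<rho>''" by blast
    moreover have "\<rho>' 0 = \<rho> 0" unfolding \<rho>'_def by simp
    ultimately show ?thesis by auto
  qed
qed

lemma trans_iff: "x \<in> (\<delta>(r := (\<delta> r)(a := \<delta> r a \<union> {p}))) s b \<longleftrightarrow> x \<in> \<delta> s b \<or> (s = r \<and> b = a \<and> x = p)"
  by auto

theorem lemma11:
  fixes Q :: "'q set" and \<delta> :: "'q \<Rightarrow> ('a::finite) \<Rightarrow> 'q set" and I F :: "'q set"
    and p q r :: 'q and a :: 'a
  assumes "buchi_wf Q \<delta> I F"
    and "complete Q \<delta>"
    and "p \<in> Q" "q \<in> Q" "r \<in> Q"
    and "q \<in> \<delta> r a"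
    and "delayed_sim \<delta> F p q"
  shows "lang \<delta> I F = lang (\<delta>(r := (\<delta> r)(a := \<delta> r a \<union> {p}))) I F"
proof
  show "lang \<delta> I F \<subseteq> lang (\<delta>(r := (\<delta> r)(a := \<delta> r a \<union> {p}))) I F"
    unfolding lang_def is_run_def by (auto simp only: trans_iff mem_Collect_eq)
next
  obtain \<sigma> where strat: "is_strategy \<delta> \<sigma>"
    and win: "\<forall>\<alpha> S. is_run \<delta> p \<alpha> S \<longrightarrow> (\<forall>i. S i \<in> F \<longrightarrow> (\<exists>k\<ge>i. dup_play \<sigma> q S \<alpha> k \<in> F))"
    using assms(7) unfolding delayed_sim_def by blast
  show "lang (\<delta>(r := (\<delta> r)(a := \<delta> r a \<union> {p}))) I F \<subseteq> lang \<delta> I F"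
  proof
    fix \<alpha> assume "\<alpha> \<in> lang (\<delta>(r := (\<delta> r)(a := \<delta> r a \<union> {p}))) I F"
    then obtain s \<rho> where s: "s \<in> I" and run: "is_run (\<delta>(r := (\<delta> r)(a := \<delta> r a \<union> {p}))) s \<alpha> \<rho>"
      and acc: "accepting F \<rho>" unfolding lang_def by blast
    have H: "\<forall>i. \<rho> (Suc i) \<in> \<delta> (\<rho> i) (\<alpha> i) \<or> (\<rho> i = r \<and> \<alpha> i = a \<and> \<rho> (Suc i) = p)"
      using run unfolding is_run_def trans_iff by blast
    have s0: "\<rho> 0 = s" using run unfolding is_run_def by blast
    have "\<exists>\<rho>'. is_run \<delta> (\<rho> 0) \<alpha> \<rho>' \<and> accepting F \<rho>'"
    proof (cases "finite {i. \<rho> (Suc i) \<notin> \<delta> (\<rho> i) (\<alpha> i)}")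
      case True
      then show ?thesis using fin_case[OF strat win assms(6)] H acc by blast
    next
      case False
      then show ?thesis using inf_case[OF strat win assms(6) H False acc] by blast
    qed
    then show "\<alpha> \<in> lang \<delta> I F" using s s0 unfolding lang_def by blast
  qed
qed

end
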